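(* Let $n=|V|\ge4$ and let $G$ be a relationship network on $V$ satisfying structural balance, known to the designer. Then there exists a valid mechanism that is efficient and DSIC if and only if either $G$ has exactly one F-component (i.e. all pairs of agents are friends) or $G$ has at least three EF-components.
   Context: A relationship network on $V=\{1,\dots,n\}$ assigns to every unordered pair of distinct agents exactly one of the symmetric relations friends, enemies, impartial; $F_i,E_i,I_i$ denote the friends, enemies, impartials of $i$. Structural balance: for all pairwise distinct $i,j,k$: $j\in F_i, k\in F_j\Rightarrow k\in F_i$; $j\in E_i,k\in E_j\Rightarrow k\in F_i$; $j\in E_i,k\in F_j\Rightarrow k\in E_i$. An EF-component is a connected component of the graph whose edges are friend or enemy pairs; an F-component is a connected component of the graph whose edges are friend pairs. Preferences: fix $w_f,w_e>0$; $p\succ_i p'$ iff $p_i>p'_i$, or $p_i=p'_i$ and $w_f\sum_{j\in F_i}(p_j-p'_j)-w_e\sum_{j\in E_i}(p_j-p'_j)>0$; $p\succsim_ip'$ means not $p'\succ_ip$. Known-network setting: each agent $i$ sends a message $m_i\subseteq V$ (the agents it reports as needy). A mechanism is $g:(2^V)^V\to[0,1]^V$ (it may depend on the known network); it is valid if $\sum_ig_i(\mathbf m)\le1$ for all $\mathbf m$; DSIC if for all $i$, all profiles $\mathbf m$ and all $m'_i\subseteq V$, $g(\mathbf m)\succsim_i g(m'_i,\mathbf m_{-i})$; efficient if for every nonempty $N\subseteq V$, at the truthful profile $m_j=N$ for all $j$, $\sum_{i\in N}g_i(\mathbf m)=1$. *)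

theory Defs
  imports Complex_Main
begin

datatype relation = Friends | Enemies | Impartial

text \<open>A relationship network on the (finite) agent type 'a: every unordered pair of
distinct agents gets exactly one symmetric relation. Values on the diagonal are irrelevant.\<close>
definition network :: "('a \<Rightarrow> 'a \<Rightarrow> relation) \<Rightarrow> bool" where
  "network G \<longleftrightarrow> (\<forall>i j. i \<noteq> j \<longrightarrow> G i j = G j i)"

definition friends :: "('a \<Rightarrow> 'a \<Rightarrow> relation) \<Rightarrow> 'a \<Rightarrow> 'a set" where
  "friends G i = {j. j \<noteq> i \<and> G i j = Friends}"

definition enemies :: "('a \<Rightarrow> 'a \<Rightarrow> relation) \<Rightarrow> 'a \<Rightarrow> 'a set" where
  "enemies G i = {j. j \<noteq> i \<and> G i j = Enemies}"

definition structural_balance :: "('a \<Rightarrow> 'a \<Rightarrow> relation) \<Rightarrow> bool" where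
  "structural_balance G \<longleftrightarrow>
    (\<forall>i j k. i \<noteq> j \<and> j \<noteq> k \<and> i \<noteq> k \<longrightarrow>
       (j \<in> friends G i \<and> k \<in> friends G j \<longrightarrow> k \<in> friends G i) \<and>
       (j \<in> enemies G i \<and> k \<in> enemies G j \<longrightarrow> k \<in> friends G i) \<and>
       (j \<in> enemies G i \<and> k \<in> friends G j \<longrightarrow> k \<in> enemies G i))"

definition F_edge :: "('a \<Rightarrow> 'a \<Rightarrow> relation) \<Rightarrow> 'a \<Rightarrow> 'a \<Rightarrow> bool" where
  "F_edge G i j \<longleftrightarrow> j \<in> friends G i"

definition EF_edge :: "('a \<Rightarrow> 'a \<Rightarrow> relation) \<Rightarrow> 'a \<Rightarrow> 'a \<Rightarrow> bool" where
  "EF_edge G i j \<longleftrightarrow> j \<in> friends G i \<or> j \<in> enemies G i"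

definition F_components :: "('a \<Rightarrow> 'a \<Rightarrow> relation) \<Rightarrow> 'a set set" where
  "F_components G = {{j. (F_edge G)\<^sup>*\<^sup>* i j} | i. True}"

definition EF_components :: "('a \<Rightarrow> 'a \<Rightarrow> relation) \<Rightarrow> 'a set set" where
  "EF_components G = {{j. (EF_edge G)\<^sup>*\<^sup>* i j} | i. True}"

definition strict_pref :: "('a::finite \<Rightarrow> 'a \<Rightarrow> relation) \<Rightarrow> real \<Rightarrow> real \<Rightarrow> 'a
    \<Rightarrow> ('a \<Rightarrow> real) \<Rightarrow> ('a \<Rightarrow> real) \<Rightarrow> bool" where
  "strict_pref G w_f w_e i p p' \<longleftrightarrow>
     p i > p' i \<or>
     (p i = p' i \<and>
      w_f * (\<Sum>j\<in>friends G i. p j - p' j) - w_e * (\<Sum>j\<in>enemies G i. p j - p' j) > 0)"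

definition weak_pref :: "('a::finite \<Rightarrow> 'a \<Rightarrow> relation) \<Rightarrow> real \<Rightarrow> real \<Rightarrow> 'a
    \<Rightarrow> ('a \<Rightarrow> real) \<Rightarrow> ('a \<Rightarrow> real) \<Rightarrow> bool" where
  "weak_pref G w_f w_e i p p' \<longleftrightarrow> \<not> strict_pref G w_f w_e i p' p"

definition mechanism :: "(('a \<Rightarrow> 'a set) \<Rightarrow> ('a \<Rightarrow> real)) \<Rightarrow> bool" where
  "mechanism g \<longleftrightarrow> (\<forall>m i. 0 \<le> g m i \<and> g m i \<le> 1)"

definition valid :: "(('a::finite \<Rightarrow> 'a set) \<Rightarrow> ('a \<Rightarrow> real)) \<Rightarrow> bool" where
  "valid g \<longleftrightarrow> (\<forall>m. (\<Sum>i\<in>UNIV. g m i) \<le> 1)"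

definition DSIC :: "('a::finite \<Rightarrow> 'a \<Rightarrow> relation) \<Rightarrow> real \<Rightarrow> real
    \<Rightarrow> (('a \<Rightarrow> 'a set) \<Rightarrow> ('a \<Rightarrow> real)) \<Rightarrow> bool" where
  "DSIC G w_f w_e g \<longleftrightarrow>
     (\<forall>i m m'. weak_pref G w_f w_e i (g m) (g (m(i := m'))))"

definition efficient :: "(('a::finite \<Rightarrow> 'a set) \<Rightarrow> ('a \<Rightarrow> real)) \<Rightarrow> bool" where
  "efficient g \<longleftrightarrow> (\<forall>N. N \<noteq> {} \<longrightarrow> (\<Sum>i\<in>N. g (\<lambda>_. N) i) = 1)"

end

theory Submission imports Defs begin

lemma upd_inv:
  fixes P :: "('a \<Rightarrow> 'b) \<Rightarrow> 'c"
  assumes "finite D" "\<forall>k. k \<notin> D \<longrightarrow> m k = m' k"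
    "\<And>m j M. j \<in> S \<Longrightarrow> P (m(j:=M)) = P m" "D \<subseteq> S"
  shows "P m = P m'"
  using assms(1,2,4)
proof (induction D arbitrary: m rule: finite_induct)
  case empty
  then have "m = m'" by auto
  then show ?case by simp
next
  case (insert x D)
  have xS: "x \<in> S" using insert.prems(2) by simp
  have "P m = P (m(x := m' x))" using assms(3)[OF xS, of m "m' x"] by simp
  also have "\<dots> = P m'"
  proof (rule insert.IH)
    show "\<forall>k. k \<notin> D \<longrightarrow> (m(x := m' x)) k = m' k" using insert.prems(1) by simp
    show "D \<subseteq> S" using insert.prems(2) by simp
  qed
  finally show ?case .
qed

lemma zero_out:
  fixes g :: "('a::finite \<Rightarrow> 'a set) \<Rightarrow> 'a \<Rightarrow> real"
  assumes "mechanism g" "valid g" "1 \<le> (\<Sum>j\<in>X. g m j)" "j \<notin> X"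
  shows "g m j = 0"
proof -
  have nn: "\<And>k. 0 \<le> g m k" using assms(1) by (simp add: mechanism_def)
  have "(\<Sum>k\<in>UNIV. g m k) = (\<Sum>k\<in>UNIV - X. g m k) + (\<Sum>k\<in>X. g m k)"
    by (rule sum.subset_diff) auto
  moreover have "g m j \<le> (\<Sum>k\<in>UNIV - X. g m k)"
    by (rule member_le_sum) (use assms(4) nn in auto)
  moreover have "(\<Sum>k\<in>UNIV. g m k) \<le> 1" using assms(2) by (simp add: valid_def)
  ultimately show ?thesis using assms(3) nn[of j] by linarith
qed

lemma sum_le1:
  fixes g :: "('a::finite \<Rightarrow> 'a set) \<Rightarrow> 'a \<Rightarrow> real"
  assumes "mechanism g" "valid g"
  shows "(\<Sum>j\<in>X. g m j) \<le> 1"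
proof -
  have "(\<Sum>j\<in>X. g m j) \<le> (\<Sum>j\<in>UNIV. g m j)"
    by (rule sum_mono2) (use assms(1) in \<open>auto simp: mechanism_def\<close>)
  also have "\<dots> \<le> 1" using assms(2) by (simp add: valid_def)
  finally show ?thesis .
qed

lemma unan:
  fixes g :: "('a::finite \<Rightarrow> 'a set) \<Rightarrow> 'a \<Rightarrow> real" and a :: 'a
  assumes "mechanism g" "valid g" "efficient g"
  shows "g (\<lambda>x. {a}) a = 1" "j \<noteq> a \<Longrightarrow> g (\<lambda>x. {a}) j = 0"
proof -
  have "\<forall>N. N \<noteq> {} \<longrightarrow> (\<Sum>i\<in>N. g (\<lambda>_. N) i) = 1" using assms(3) unfolding efficient_def .
  then have "(\<Sum>i\<in>{a}. g (\<lambda>_. {a}) i) = 1" by (metis insert_not_empty)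
  then show 1: "g (\<lambda>x. {a}) a = 1" by simp
  show "j \<noteq> a \<Longrightarrow> g (\<lambda>x. {a}) j = 0"
    by (rule zero_out[OF assms(1,2), where X="{a}"]) (use 1 in auto)
qed

definition base :: "('a \<Rightarrow> 'a \<times> 'a) \<Rightarrow> ('a \<Rightarrow> 'a set) \<Rightarrow> 'a \<Rightarrow> real" where
  "base ld m i = (if i \<in> m (fst (ld i)) \<and> m (fst (ld i)) = m (snd (ld i))
                  then 1 / real (card (m (fst (ld i)))) else 0)"

lemma base_bound:
  assumes "\<And>i. ld i = (b,c) \<or> ld i = (a,c) \<or> ld i = (a,b)"
  shows "base ld m i \<le> (if i \<in> (if m b = m c then m b else m a)
            then 1 / real (card (if m b = m c then m b else m a)) else 0)"
  using assms[of i] by (auto simp: base_def)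

lemma base_nonneg: "0 \<le> base ld m i" by (simp add: base_def)

lemma base_le1: "base ld m (i::'a::finite) \<le> 1"
proof (cases "i \<in> m (fst (ld i)) \<and> m (fst (ld i)) = m (snd (ld i))")
  case True
  then have "0 < card (m (fst (ld i)))" by (auto simp: card_gt_0_iff)
  then have "1 / real (card (m (fst (ld i)))) \<le> 1" by simp
  then show ?thesis unfolding base_def if_P[OF True] .
next
  case False
  show ?thesis unfolding base_def if_not_P[OF False] by simp
qed

lemma base_sum:
  assumes "\<And>i. ld i = (b,c) \<or> ld i = (a,c) \<or> ld i = (a,b)"
  shows "(\<Sum>i\<in>UNIV. base ld m (i::'a::finite)) \<le> 1"
proof -
  define N where "N = (if m b = m c then m b else m a)"
  have "(\<Sum>i\<in>UNIV. base ld m i) \<le> (\<Sum>i\<in>UNIV. if i \<in> N then 1 / real (card N) else 0)"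
    proof (rule sum_mono)
    fix i
    show "base ld m i \<le> (if i \<in> N then 1 / real (card N) else 0)"
      unfolding N_def by (rule base_bound[where ld=ld and a=a and b=b and c=c, OF assms])
  qed
  also have "\<dots> = (\<Sum>i\<in>N. 1 / real (card N))"
    by (simp add: sum.If_cases)
  also have "\<dots> \<le> 1" by (cases "card N = 0") auto
  finally show ?thesis .
qed

lemma base_unan: "base ld (\<lambda>_. N) i = (if i \<in> N then 1 / real (card N) else 0)"
  by (simp add: base_def)

lemma base_unan_N:
  assumes "N \<noteq> {}"
  shows "(\<Sum>i\<in>N. base ld (\<lambda>_. N) (i::'a::finite)) = 1"
proof -
  have "(\<Sum>i\<in>N. base ld (\<lambda>_. N) i) = (\<Sum>i\<in>N. 1 / real (card N))"
    by (rule sum.cong) (auto simp: base_unan)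
  also have "\<dots> = 1" using assms by (simp add: card_gt_0_iff)
  finally show ?thesis .
qed

lemma base_unan_UNIV:
  assumes "N \<noteq> {}"
  shows "(\<Sum>i\<in>UNIV. base ld (\<lambda>_. N) (i::'a::finite)) = 1"
proof -
  have "(\<Sum>i\<in>UNIV. base ld (\<lambda>_. N) i) = (\<Sum>i\<in>UNIV. if i \<in> N then 1 / real (card N) else 0)"
    by (simp add: base_unan)
  also have "\<dots> = (\<Sum>i\<in>N. 1 / real (card N))"
    by (simp add: sum.If_cases)
  also have "\<dots> = 1" using assms by (simp add: card_gt_0_iff)
  finally show ?thesis .
qed

lemma base_upd: "fst (ld i) \<noteq> j \<Longrightarrow> snd (ld i) \<noteq> j \<Longrightarrow> base ld (m(j:=M)) i = base ld m i"
proof -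
  assume h: "fst (ld i) \<noteq> j" "snd (ld i) \<noteq> j"
  have h1: "(m(j:=M)) (fst (ld i)) = m (fst (ld i))" using h by simp
  have h2: "(m(j:=M)) (snd (ld i)) = m (snd (ld i))" using h by simp
  show ?thesis by (simp only: base_def h1 h2)
qed

lemma dsic_suff:
  assumes "\<And>i m M. g (m(i:=M)) i = g m i \<and>
      (\<Sum>j\<in>friends G i. g (m(i:=M)) j) = (\<Sum>j\<in>friends G i. g m j) \<and>
      (\<Sum>j\<in>enemies G i. g (m(i:=M)) j) = (\<Sum>j\<in>enemies G i. g m j)"
  shows "DSIC G wF wE g"
  unfolding DSIC_def weak_pref_def strict_pref_def
  using assms by (simp add: sum_subtractf)

context
  fixes G :: "'a::finite \<Rightarrow> 'a \<Rightarrow> relation"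
  assumes net: "network G" and bal: "structural_balance G"
begin

lemma fr_irr: "i \<notin> friends G i" by (simp add: friends_def)
lemma en_irr: "i \<notin> enemies G i" by (simp add: enemies_def)
lemma fr_sym: "j \<in> friends G i \<Longrightarrow> i \<in> friends G j"
  using net by (auto simp: friends_def network_def)
lemma en_sym: "j \<in> enemies G i \<Longrightarrow> i \<in> enemies G j"
  using net by (auto simp: enemies_def network_def)
lemma fr_en: "j \<in> friends G i \<Longrightarrow> j \<notin> enemies G i"
  by (simp add: friends_def enemies_def)
lemma bal1: "j \<in> friends G i \<Longrightarrow> k \<in> friends G j \<Longrightarrow> k \<noteq> i \<Longrightarrow> k \<in> friends G i"
proof -
  assume a: "j \<in> friends G i" "k \<in> friends G j" "k \<noteq> i"
  then have "i \<noteq> j" "j \<noteq> k" by (auto simp: friends_def)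
  with a bal show ?thesis unfolding structural_balance_def by blast
qed
lemma bal2: "j \<in> enemies G i \<Longrightarrow> k \<in> enemies G j \<Longrightarrow> k \<noteq> i \<Longrightarrow> k \<in> friends G i"
proof -
  assume a: "j \<in> enemies G i" "k \<in> enemies G j" "k \<noteq> i"
  then have "i \<noteq> j" "j \<noteq> k" by (auto simp: enemies_def)
  with a bal show ?thesis unfolding structural_balance_def by blast
qed
lemma bal3: "j \<in> enemies G i \<Longrightarrow> k \<in> friends G j \<Longrightarrow> k \<noteq> i \<Longrightarrow> k \<in> enemies G i"
proof -
  assume a: "j \<in> enemies G i" "k \<in> friends G j" "k \<noteq> i"
  then have "i \<noteq> j" "j \<noteq> k" by (auto simp: enemies_def friends_def)
  with a bal show ?thesis unfolding structural_balance_def by blast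
qed
lemma bal4: "j \<in> friends G i \<Longrightarrow> k \<in> enemies G j \<Longrightarrow> k \<noteq> i \<Longrightarrow> k \<in> enemies G i"
proof -
  assume a: "j \<in> friends G i" "k \<in> enemies G j" "k \<noteq> i"
  have "i \<in> enemies G k" using bal3[OF en_sym[OF a(2)] fr_sym[OF a(1)]] a(3) by auto
  then show ?thesis by (rule en_sym)
qed

lemma fr_class: "j \<in> friends G i \<Longrightarrow>
   insert j (friends G j) = insert i (friends G i) \<and> enemies G j = enemies G i"
proof -
  assume a: "j \<in> friends G i"
  have 1: "insert j (friends G j) \<subseteq> insert i (friends G i)"
    using a bal1 by blast
  have 2: "insert i (friends G i) \<subseteq> insert j (friends G j)"
    using fr_sym[OF a] bal1 by blast
  have 3: "enemies G j \<subseteq> enemies G i"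
    using a bal4 fr_en fr_sym by blast
  have 4: "enemies G i \<subseteq> enemies G j"
    using fr_sym[OF a] bal4 fr_en a by blast
  show ?thesis using 1 2 3 4 by blast
qed

lemma en_class: "j \<in> enemies G i \<Longrightarrow>
   insert j (friends G j) = enemies G i \<and> enemies G j = insert i (friends G i)"
proof -
  assume a: "j \<in> enemies G i"
  have 1: "insert j (friends G j) \<subseteq> enemies G i"
    using a bal3 en_sym fr_en by blast
  have 2: "enemies G i \<subseteq> insert j (friends G j)"
    using en_sym[OF a] bal2 by blast
  have 3: "enemies G j \<subseteq> insert i (friends G i)"
    using a bal2 by blast
  have 4: "insert i (friends G i) \<subseteq> enemies G j"
    using en_sym[OF a] bal3 fr_en a by blast
  show ?thesis using 1 2 3 4 by blast
qed

definition Cl :: "'a \<Rightarrow> 'a set" where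
  "Cl i = insert i (friends G i \<union> enemies G i)"

lemma Cl_self: "i \<in> Cl i" by (simp add: Cl_def)

lemma Cl_class: "j \<in> Cl i \<Longrightarrow> Cl j = Cl i"
proof -
  assume "j \<in> Cl i"
  then consider "j = i" | "j \<in> friends G i" | "j \<in> enemies G i" by (auto simp: Cl_def)
  then show ?thesis
  proof cases
    case 2
    from fr_class[OF this] show ?thesis unfolding Cl_def by (metis Un_insert_left)
  next
    case 3
    from en_class[OF this] show ?thesis unfolding Cl_def by (metis Un_insert_left sup_commute)
  qed simp
qed

lemma EF_rt: "(EF_edge G)\<^sup>*\<^sup>* i j \<longleftrightarrow> j \<in> Cl i"
proof
  assume "(EF_edge G)\<^sup>*\<^sup>* i j"
  then show "j \<in> Cl i"
  proof (induction rule: rtranclp_induct)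
    case base then show ?case by (rule Cl_self)
  next
    case (step y z)
    then have "z \<in> Cl y" by (auto simp: Cl_def EF_edge_def)
    then show ?case using Cl_class[OF step(3)] by simp
  qed
next
  assume "j \<in> Cl i"
  then have "j = i \<or> EF_edge G i j" by (auto simp: Cl_def EF_edge_def)
  then show "(EF_edge G)\<^sup>*\<^sup>* i j" by auto
qed

lemma F_rt: "(F_edge G)\<^sup>*\<^sup>* i j \<longleftrightarrow> j \<in> insert i (friends G i)"
proof
  assume "(F_edge G)\<^sup>*\<^sup>* i j"
  then show "j \<in> insert i (friends G i)"
  proof (induction rule: rtranclp_induct)
    case base then show ?case by simp
  next
    case (step y z)
    then have "z \<in> friends G y" by (auto simp: F_edge_def)
    then show ?case using step(3) fr_class by auto
  qed
next
  assume "j \<in> insert i (friends G i)"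
  then have "j = i \<or> F_edge G i j" by (auto simp: F_edge_def)
  then show "(F_edge G)\<^sup>*\<^sup>* i j" by auto
qed

lemma EF_comp: "EF_components G = range Cl"
  unfolding EF_components_def EF_rt by auto

lemma F_comp: "F_components G = range (\<lambda>i. insert i (friends G i))"
  unfolding F_components_def F_rt by auto

definition Psi :: "real \<Rightarrow> real \<Rightarrow> (('a \<Rightarrow> 'a set) \<Rightarrow> 'a \<Rightarrow> real) \<Rightarrow> 'a \<Rightarrow> ('a \<Rightarrow> 'a set) \<Rightarrow> real" where
  "Psi wF wE g i m = wF * (\<Sum>j\<in>insert i (friends G i). g m j) - wE * (\<Sum>j\<in>enemies G i. g m j)"

lemma dsic_both:
  assumes "DSIC G wF wE g"
  shows "g (m(i:=M)) i = g m i \<and> Psi wF wE g i (m(i:=M)) = Psi wF wE g i m"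
proof -
  define p where "p = g m"
  define q where "q = g (m(i:=M))"
  have h1: "\<not> strict_pref G wF wE i q p"
    using assms unfolding DSIC_def weak_pref_def p_def q_def by blast
  have "\<not> strict_pref G wF wE i (g ((m(i:=M))(i := m i))) (g (m(i:=M)))"
    using assms unfolding DSIC_def weak_pref_def by blast
  then have h2: "\<not> strict_pref G wF wE i p q" unfolding p_def q_def by simp
  have own: "q i = p i" using h1 h2 unfolding strict_pref_def by linarith
  have a: "\<not> (wF * (\<Sum>j\<in>friends G i. q j - p j) - wE * (\<Sum>j\<in>enemies G i. q j - p j) > 0)"
    using h1 own unfolding strict_pref_def by auto
  have b: "\<not> (wF * (\<Sum>j\<in>friends G i. p j - q j) - wE * (\<Sum>j\<in>enemies G i. p j - q j) > 0)"
    using h2 own unfolding strict_pref_def by auto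
  have s1: "(\<Sum>j\<in>friends G i. q j - p j) = (\<Sum>j\<in>friends G i. q j) - (\<Sum>j\<in>friends G i. p j)"
    by (rule sum_subtractf)
  have s2: "(\<Sum>j\<in>enemies G i. q j - p j) = (\<Sum>j\<in>enemies G i. q j) - (\<Sum>j\<in>enemies G i. p j)"
    by (rule sum_subtractf)
  have s3: "(\<Sum>j\<in>friends G i. p j - q j) = (\<Sum>j\<in>friends G i. p j) - (\<Sum>j\<in>friends G i. q j)"
    by (rule sum_subtractf)
  have s4: "(\<Sum>j\<in>enemies G i. p j - q j) = (\<Sum>j\<in>enemies G i. p j) - (\<Sum>j\<in>enemies G i. q j)"
    by (rule sum_subtractf)
  have i1: "(\<Sum>j\<in>insert i (friends G i). q j) = q i + (\<Sum>j\<in>friends G i. q j)"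
    using fr_irr[of i] by (simp add: sum.insert)
  have i2: "(\<Sum>j\<in>insert i (friends G i). p j) = p i + (\<Sum>j\<in>friends G i. p j)"
    using fr_irr[of i] by (simp add: sum.insert)
  define D where "D = wF * ((\<Sum>j\<in>friends G i. q j) - (\<Sum>j\<in>friends G i. p j)) - wE * ((\<Sum>j\<in>enemies G i. q j) - (\<Sum>j\<in>enemies G i. p j))"
  have nb: "wF * ((\<Sum>j\<in>friends G i. p j) - (\<Sum>j\<in>friends G i. q j)) - wE * ((\<Sum>j\<in>enemies G i. p j) - (\<Sum>j\<in>enemies G i. q j)) = - D"
    unfolding D_def by (simp add: algebra_simps)
  have D0: "D = 0" using a b unfolding s1 s2 s3 s4 nb D_def[symmetric] by linarith
  have "Psi wF wE g i (m(i:=M)) - Psi wF wE g i m = wF * (q i - p i) + D"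
    unfolding Psi_def p_def[symmetric] q_def[symmetric] i1 i2 D_def by (simp add: algebra_simps)
  then have ps: "Psi wF wE g i (m(i:=M)) = Psi wF wE g i m" using own D0 by simp
  show ?thesis using own ps unfolding p_def q_def by blast
qed

lemma psi_upd:
  assumes "DSIC G wF wE g" "j \<in> insert i (friends G i)"
  shows "Psi wF wE g i (m(j:=M)) = Psi wF wE g i m"
proof (cases "j = i")
  case True then show ?thesis using dsic_both[OF assms(1)] by simp
next
  case False
  then have j: "j \<in> friends G i" using assms(2) by simp
  have "\<And>m. Psi wF wE g j m = Psi wF wE g i m" unfolding Psi_def using fr_class[OF j] by simp
  then show ?thesis using dsic_both[OF assms(1), of m j M] by simp
qed

lemma psi_agree:
  assumes "DSIC G wF wE g" "\<forall>k. k \<notin> insert i (friends G i) \<longrightarrow> m k = m' k"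
  shows "Psi wF wE g i m = Psi wF wE g i m'"
proof -
  have step: "\<And>m j M. j \<in> insert i (friends G i) \<Longrightarrow> Psi wF wE g i (m(j := M)) = Psi wF wE g i m"
    using psi_upd[OF assms(1)] by blast
  show ?thesis
  proof (rule upd_inv[where P="Psi wF wE g i" and D="{k. m k \<noteq> m' k}" and S="insert i (friends G i)"])
    show "{k. m k \<noteq> m' k} \<subseteq> insert i (friends G i)"
    proof
      fix k assume "k \<in> {k. m k \<noteq> m' k}"
      then show "k \<in> insert i (friends G i)" using assms(2) by auto
    qed
  next
    show "finite {k. m k \<noteq> m' k}" by simp
  next
    show "\<forall>k. k \<notin> {k. m k \<noteq> m' k} \<longrightarrow> m k = m' k" by simp
  next
    fix m :: "'a \<Rightarrow> 'a set" and j M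
    assume "j \<in> insert i (friends G i)"
    then show "Psi wF wE g i (m(j := M)) = Psi wF wE g i m" by (rule step)
  qed
qed

lemma key:
  assumes mech: "mechanism g" and vl: "valid g" and ef: "efficient g"
    and ds: "DSIC G wF wE g" and wF: "wF > 0" and wE: "wE > 0"
  shows "1 \<le> (\<Sum>j\<in>insert a (friends G a). g (\<lambda>j. if j \<in> Cl a then {b} else {a}) j)"
proof -
  define U where "U = (\<lambda>_::'a. {a})"
  define P1 where "P1 = (\<lambda>j. if j \<in> enemies G a then {b} else {a})"
  define P where "P = (\<lambda>j. if j \<in> Cl a then {b} else {a})"
  define X where "X = insert a (friends G a)"
  have U1: "g U a = 1" unfolding U_def by (rule unan(1)[OF mech vl ef])
  have U0: "\<And>j. j \<noteq> a \<Longrightarrow> g U j = 0" unfolding U_def by (rule unan(2)[OF mech vl ef])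
  have nn: "\<And>m j. 0 \<le> g m j" using mech by (simp add: mechanism_def)
  have F0: "(\<Sum>j\<in>friends G a. g U j) = 0"
    by (rule sum.neutral) (auto intro: U0 simp: friends_def)
  have E0U: "(\<Sum>j\<in>enemies G a. g U j) = 0"
    by (rule sum.neutral) (auto intro: U0 simp: enemies_def)
  have XU: "(\<Sum>j\<in>X. g U j) = 1"
    unfolding X_def using fr_irr[of a] F0 U1 by simp
  have S1: "1 \<le> (\<Sum>j\<in>X. g P1 j)"
  proof (cases "enemies G a = {}")
    case True then have "P1 = U" unfolding P1_def U_def by simp
    then show ?thesis using XU by simp
  next
    case False then obtain e where e: "e \<in> enemies G a" by blast
    note ec = en_class[OF e]
    have agree: "\<forall>k. k \<notin> insert e (friends G e) \<longrightarrow> P1 k = U k"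
      using ec unfolding P1_def U_def by auto
    have "Psi wF wE g e P1 = Psi wF wE g e U"
      by (rule psi_agree[OF ds agree])
    moreover have "Psi wF wE g e U = wF * (\<Sum>j\<in>enemies G a. g U j) - wE * (\<Sum>j\<in>X. g U j)"
      using ec unfolding Psi_def X_def by simp
    moreover have "Psi wF wE g e P1 = wF * (\<Sum>j\<in>enemies G a. g P1 j) - wE * (\<Sum>j\<in>X. g P1 j)"
      using ec unfolding Psi_def X_def by simp
    moreover have "0 \<le> wF * (\<Sum>j\<in>enemies G a. g P1 j)"
      using wF nn by (simp add: sum_nonneg)
    ultimately have "wE * 1 \<le> wE * (\<Sum>j\<in>X. g P1 j)" using XU E0U by simp
    then show ?thesis using wE by (simp add: mult_le_cancel_left_pos)
  qed
  have X1: "(\<Sum>j\<in>X. g P1 j) = 1" using S1 sum_le1[OF mech vl, where X=X and m=P1] by simp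
  have E0: "(\<Sum>j\<in>enemies G a. g P1 j) = 0"
  proof (rule sum.neutral, rule ballI)
    fix j assume j: "j \<in> enemies G a"
    then have "j \<notin> X" unfolding X_def using en_irr[of a] fr_en by blast
    then show "g P1 j = 0" by (rule zero_out[OF mech vl S1])
  qed
  have agree2: "\<forall>k. k \<notin> insert a (friends G a) \<longrightarrow> P k = P1 k"
    unfolding P_def P1_def Cl_def by auto
  have "Psi wF wE g a P = Psi wF wE g a P1" by (rule psi_agree[OF ds agree2])
  also have "\<dots> = wF" unfolding Psi_def X_def[symmetric] X1 E0 by simp
  finally have "wF * (\<Sum>j\<in>X. g P j) - wE * (\<Sum>j\<in>enemies G a. g P j) = wF"
    unfolding Psi_def X_def .
  moreover have "0 \<le> wE * (\<Sum>j\<in>enemies G a. g P j)"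
    using wE nn by (simp add: sum_nonneg)
  ultimately have "wF * 1 \<le> wF * (\<Sum>j\<in>X. g P j)" by simp
  then show ?thesis using wF unfolding X_def P_def by (simp add: mult_le_cancel_left_pos)
qed

lemma impossible:
  assumes mech: "mechanism g" and vl: "valid g" and ef: "efficient g"
    and ds: "DSIC G wF wE g" and wF: "wF > 0" and wE: "wE > 0"
    and nf: "\<not> (\<forall>i j. i \<noteq> j \<longrightarrow> j \<in> friends G i)" and c3: "card (range Cl) < 3"
  shows False
proof -
  obtain a b where ab: "a \<noteq> b" "b \<notin> friends G a" using nf by blast
  show False
  proof (cases "\<forall>j. j \<in> Cl a")
    case True
    then have "(\<lambda>j. if j \<in> Cl a then {b} else {a}) = (\<lambda>_. {b})" by auto
    with key[OF assms(1-6), of a b] have k: "1 \<le> (\<Sum>j\<in>insert a (friends G a). g (\<lambda>_. {b}) j)" by simp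
    have "(\<Sum>j\<in>insert a (friends G a). g (\<lambda>_. {b}) j) = 0"
    proof (rule sum.neutral, rule ballI)
      fix j assume "j \<in> insert a (friends G a)"
      then have "j \<noteq> b" using ab by blast
      then show "g (\<lambda>_. {b}) j = 0" by (rule unan(2)[OF mech vl ef])
    qed
    with k show False by simp
  next
    case False then obtain c where c: "c \<notin> Cl a" by blast
    have cover: "\<forall>j. j \<in> Cl a \<or> j \<in> Cl c"
    proof (rule ccontr)
      assume "\<not> (\<forall>j. j \<in> Cl a \<or> j \<in> Cl c)"
      then obtain j where j: "j \<notin> Cl a" "j \<notin> Cl c" by blast
      have d1: "Cl a \<noteq> Cl c" using c Cl_self[of c] by blast
      have d2: "Cl j \<noteq> Cl a" using j Cl_self[of j] by blast
      have d3: "Cl j \<noteq> Cl c" using j Cl_self[of j] by blast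
      have "card {Cl a, Cl c, Cl j} = 3" using d1 d2 d3 by auto
      moreover have "card {Cl a, Cl c, Cl j} \<le> card (range Cl)"
        by (rule card_mono) auto
      ultimately show False using c3 by simp
    qed
    have disj: "\<And>j. j \<in> Cl a \<Longrightarrow> j \<notin> Cl c"
    proof
      fix j assume "j \<in> Cl a" "j \<in> Cl c"
      then have "Cl a = Cl c" using Cl_class by metis
      then show False using c Cl_self[of c] by blast
    qed
    define P where "P = (\<lambda>j. if j \<in> Cl a then {c} else {a})"
    have P2: "P = (\<lambda>j. if j \<in> Cl c then {a} else {c})"
    proof
      fix j show "P j = (if j \<in> Cl c then {a} else {c})"
        using cover disj[of j] unfolding P_def by auto
    qed
    have k1: "1 \<le> (\<Sum>j\<in>insert a (friends G a). g P j)"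
      using key[OF assms(1-6), of a c] unfolding P_def .
    have k2: "1 \<le> (\<Sum>j\<in>insert c (friends G c). g P j)"
      using key[OF assms(1-6), of c a] unfolding P2 .
    have "(\<Sum>j\<in>insert a (friends G a). g P j) = 0"
    proof (rule sum.neutral, rule ballI)
      fix j assume "j \<in> insert a (friends G a)"
      then have "j \<in> Cl a" unfolding Cl_def by blast
      then have "j \<notin> insert c (friends G c)" using disj unfolding Cl_def by blast
      then show "g P j = 0" by (rule zero_out[OF mech vl k2])
    qed
    with k1 show False by simp
  qed
qed

lemma Cl_ne: "Cl u \<noteq> Cl v \<Longrightarrow> u \<notin> Cl v"
  using Cl_class by metis

lemma exists_EF:
  assumes "3 \<le> card (range Cl)"
  shows "\<exists>g. mechanism g \<and> valid g \<and> efficient g \<and> DSIC G wF wE g"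
proof -
  obtain S where S: "S \<subseteq> range Cl" "card S = 3"
    using obtain_subset_with_card_n[OF assms] by metis
  then obtain x y z where xyz: "S = {x,y,z}" "x \<noteq> y" "y \<noteq> z" "x \<noteq> z"
    unfolding card_3_iff by blast
  obtain a where a: "x = Cl a" using S(1) xyz(1) by auto
  obtain b where b: "y = Cl b" using S(1) xyz(1) by auto
  obtain c where c: "z = Cl c" using S(1) xyz(1) by auto
  have nab: "a \<notin> Cl b" "b \<notin> Cl a" "a \<notin> Cl c" "c \<notin> Cl a" "b \<notin> Cl c" "c \<notin> Cl b"
  proof -
    have "Cl a \<noteq> Cl b" "Cl a \<noteq> Cl c" "Cl b \<noteq> Cl c" using xyz a b c by simp_all
    then show "a \<notin> Cl b" "b \<notin> Cl a" "a \<notin> Cl c" "c \<notin> Cl a" "b \<notin> Cl c" "c \<notin> Cl b"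
      using Cl_ne by simp_all
  qed
  define ld where "ld i = (if i \<in> Cl a then (b,c) else if i \<in> Cl b then (a,c) else (a,b))" for i
  have ldc: "\<And>i. ld i = (b,c) \<or> ld i = (a,c) \<or> ld i = (a,b)" by (simp add: ld_def)
  have ldout: "fst (ld i) \<notin> Cl i \<and> snd (ld i) \<notin> Cl i" for i
  proof (cases "i \<in> Cl a")
    case True
    then have "Cl i = Cl a" by (rule Cl_class)
    then show ?thesis using True nab by (simp add: ld_def)
  next
    case F1: False
    show ?thesis
    proof (cases "i \<in> Cl b")
      case True
      then have "Cl i = Cl b" by (rule Cl_class)
      then show ?thesis using F1 True nab by (simp add: ld_def)
    next
      case False
      have "a \<notin> Cl i" using F1 Cl_class Cl_self by metis
      moreover have "b \<notin> Cl i" using False Cl_class Cl_self by metis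
      ultimately show ?thesis using F1 False by (simp add: ld_def)
    qed
  qed
  define g where "g = base ld"
  have "mechanism g" unfolding mechanism_def g_def by (simp add: base_nonneg base_le1)
  moreover have "valid g" unfolding valid_def g_def
    using base_sum[where ld=ld and a=a and b=b and c=c, OF ldc] by simp
  moreover have "efficient g" unfolding efficient_def g_def by (simp add: base_unan_N)
  moreover have "DSIC G wF wE g"
  proof (rule dsic_suff)
    fix i m M
    have keep: "g (m(i:=M)) k = g m k" if k: "k \<in> Cl i" for k
    proof -
      have "Cl k = Cl i" using k by (rule Cl_class)
      then have "i \<in> Cl k" using Cl_self by metis
      then have "fst (ld k) \<noteq> i" "snd (ld k) \<noteq> i" using ldout[of k] by auto
      then show ?thesis unfolding g_def by (rule base_upd)
    qed
    have "i \<in> Cl i" "friends G i \<subseteq> Cl i" "enemies G i \<subseteq> Cl i" by (auto simp: Cl_def)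
    then show "g (m(i:=M)) i = g m i \<and>
      (\<Sum>j\<in>friends G i. g (m(i:=M)) j) = (\<Sum>j\<in>friends G i. g m j) \<and>
      (\<Sum>j\<in>enemies G i. g (m(i:=M)) j) = (\<Sum>j\<in>enemies G i. g m j)"
      using keep by (auto intro: sum.cong)
  qed
  ultimately show ?thesis by blast
qed

lemma exists_F:
  assumes card4: "4 \<le> card (UNIV::'a set)" and allf: "\<forall>i j. i \<noteq> j \<longrightarrow> j \<in> friends G i"
  shows "\<exists>g. mechanism g \<and> valid g \<and> efficient g \<and> DSIC G wF wE g"
proof -
  obtain T :: "'a set" where T: "card T = 4"
    using obtain_subset_with_card_n[OF card4] by metis
  then have "T \<noteq> {}" by auto
  then obtain d where d: "d \<in> T" by blast
  have "card (T - {d}) = 3" using T d by simp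
  then obtain a b c where abc: "T - {d} = {a,b,c}" "a \<noteq> b" "b \<noteq> c" "a \<noteq> c"
    unfolding card_3_iff by blast
  have dn: "a \<noteq> d" "b \<noteq> d" "c \<noteq> d" using abc(1) by auto
  define ld where "ld i = (if i = a then (b,c) else if i = b then (a,c) else (a,b))" for i
  have ldc: "\<And>i. ld i = (b,c) \<or> ld i = (a,c) \<or> ld i = (a,b)" by (simp add: ld_def)
  define g where "g m i = base ld m i + (if i = d then 1 - (\<Sum>k\<in>UNIV. base ld m k) else 0)" for m i
  have bs: "(\<Sum>k\<in>UNIV. base ld m k) \<le> 1" for m by (rule base_sum[where ld=ld and a=a and b=b and c=c, OF ldc])
  have tot: "(\<Sum>i\<in>UNIV. g m i) = 1" for m
    unfolding g_def by (simp add: sum.distrib)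
  have own_base: "base ld (m(j:=M)) j = base ld m j" for m j M
    by (rule base_upd) (use abc in \<open>auto simp: ld_def\<close>)
  have d_base: "base ld (m(d:=M)) k = base ld m k" for m M k
    by (rule base_upd) (use dn in \<open>auto simp: ld_def\<close>)
  have own: "g (m(j:=M)) j = g m j" for m j M
  proof (cases "j = d")
    case True
    then show ?thesis unfolding g_def using d_base by simp
  next
    case False
    then show ?thesis unfolding g_def using own_base by simp
  qed
  have fr: "friends G i = UNIV - {i}" for i using allf by (auto simp: friends_def)
  have en: "enemies G i = {}" for i
  proof -
    have "k \<notin> enemies G i" for k
    proof (cases "k = i")
      case True then show ?thesis by (simp add: en_irr)
    next
      case False then have "k \<in> friends G i" using allf[rule_format, of i k] by auto
      then show ?thesis by (rule fr_en)
    qed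
    then show ?thesis by blast
  qed
  have rest: "(\<Sum>j\<in>friends G i. g m j) = 1 - g m i" for m i
    unfolding fr using tot[of m] by (simp add: sum_diff1)
  have nn: "\<And>m k. 0 \<le> base ld m k" by (rule base_nonneg)
  have "mechanism g" unfolding mechanism_def
  proof (intro allI conjI)
    fix m i
    show "0 \<le> g m i" unfolding g_def using bs[of m] nn[of m i] by simp
    show "g m i \<le> 1"
    proof (cases "i = d")
      case True
      have "base ld m d \<le> (\<Sum>k\<in>UNIV. base ld m k)"
        by (rule member_le_sum) (auto intro: nn)
      then show ?thesis unfolding g_def using True by simp
    next
      case False
      then show ?thesis unfolding g_def using base_le1[of ld m i] by simp
    qed
  qed
  moreover have "valid g" unfolding valid_def using tot by simp
  moreover have "efficient g" unfolding efficient_def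
  proof (intro allI impI)
    fix N :: "'a set" assume N: "N \<noteq> {}"
    have "g (\<lambda>_. N) i = base ld (\<lambda>_. N) i" for i
      unfolding g_def using base_unan_UNIV[OF N, of ld] by simp
    then show "(\<Sum>i\<in>N. g (\<lambda>_. N) i) = 1" using base_unan_N[OF N, of ld] by simp
  qed
  moreover have "DSIC G wF wE g"
  proof (rule dsic_suff)
    fix i m M
    show "g (m(i:=M)) i = g m i \<and>
      (\<Sum>j\<in>friends G i. g (m(i:=M)) j) = (\<Sum>j\<in>friends G i. g m j) \<and>
      (\<Sum>j\<in>enemies G i. g (m(i:=M)) j) = (\<Sum>j\<in>enemies G i. g m j)"
      using own[of m i M] rest[of "m(i:=M)" i] rest[of m i] en[of i] by simp
  qed
  ultimately show ?thesis by blast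
qed

end

theorem theorem5:
  fixes G :: "'a::finite \<Rightarrow> 'a \<Rightarrow> relation" and w_f w_e :: real
  assumes "card (UNIV :: 'a set) \<ge> 4"
    and "w_f > 0" and "w_e > 0"
    and "network G"
    and "structural_balance G"
  shows "(\<exists>g. mechanism g \<and> valid g \<and> efficient g \<and> DSIC G w_f w_e g) \<longleftrightarrow>
         (card (F_components G) = 1 \<or> card (EF_components G) \<ge> 3)"
proof -
  note net = assms(4) and bal = assms(5)
  have EFc: "EF_components G = range (Cl G)" by (rule EF_comp[OF net bal])
  have Fc: "F_components G = range (\<lambda>i. insert i (friends G i))" by (rule F_comp[OF net bal])
  have F1: "card (F_components G) = 1 \<longleftrightarrow> (\<forall>i j. i \<noteq> j \<longrightarrow> j \<in> friends G i)"
  proof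
    assume "card (F_components G) = 1"
    then obtain S where S: "range (\<lambda>i. insert i (friends G i)) = {S}"
      unfolding Fc by (auto simp: card_1_singleton_iff)
    show "\<forall>i j. i \<noteq> j \<longrightarrow> j \<in> friends G i"
    proof (intro allI impI)
      fix i j :: 'a assume ij: "i \<noteq> j"
      have "insert j (friends G j) = S" "insert i (friends G i) = S" using S by (metis rangeI singletonD)+
      then have "j \<in> insert i (friends G i)" by blast
      then show "j \<in> friends G i" using ij by simp
    qed
  next
    assume all: "\<forall>i j. i \<noteq> j \<longrightarrow> j \<in> friends G i"
    have "insert i (friends G i) = UNIV" for i
    proof (rule set_eqI)
      fix x show "x \<in> insert i (friends G i) \<longleftrightarrow> x \<in> UNIV"
        using all[rule_format, of i x] by auto
    qed
    then have "range (\<lambda>i. insert i (friends G i)) = {UNIV}" by auto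
    then show "card (F_components G) = 1" unfolding Fc by simp
  qed
  show ?thesis
  proof
    assume "\<exists>g. mechanism g \<and> valid g \<and> efficient g \<and> DSIC G w_f w_e g"
    then obtain g where g: "mechanism g" "valid g" "efficient g" "DSIC G w_f w_e g" by blast
    show "card (F_components G) = 1 \<or> card (EF_components G) \<ge> 3"
    proof (rule ccontr)
      assume "\<not> (card (F_components G) = 1 \<or> card (EF_components G) \<ge> 3)"
      then have "\<not> (\<forall>i j. i \<noteq> j \<longrightarrow> j \<in> friends G i)" "card (range (Cl G)) < 3"
        using F1 EFc by auto
      then show False using impossible[OF net bal g assms(2,3)] by blast
    qed
  next
    assume "card (F_components G) = 1 \<or> card (EF_components G) \<ge> 3"
    then show "\<exists>g. mechanism g \<and> valid g \<and> efficient g \<and> DSIC G w_f w_e g"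
      using exists_F[OF net bal assms(1)] exists_EF[OF net bal] F1 EFc by auto
  qed
qed

end
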